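(* Let $0 \le r \le n/2$ be an integer and let $A$ be the adjacency matrix of the subgraph of the Hamming cube $\{0,1\}^n$ induced by the Hamming ball $B(n,r) = \{x : |x| \le r\}$. Then the maximal eigenvalue of $A$ is $\lambda = n - 2x$, where $x$ is the smallest root of the Krawtchouk polynomial $K^{(n)}_{r+1}$. Its multiplicity is $1$, and the corresponding eigenfunction is a positive spherical function on $B(n,r)$ (i.e. its value at a point $y$ depends only on $|y|$).
   Context: The Hamming cube $\{0,1\}^n$ is the graph where two vectors are adjacent iff they differ in exactly one coordinate; $|x|$ is the number of nonzero coordinates of $x$. The Krawtchouk polynomial is $K^{(n)}_k(x)=\sum_{\ell=0}^k(-1)^\ell\binom{x}{\ell}\binom{n-x}{k-\ell}$; its roots are real, distinct and lie in $(0,n)$. *)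

theory Defs
  imports Complex_Main
begin

text \<open>Points of the Hamming cube {0,1}^n are represented by their supports:
  x corresponds to the set {i < n. x_i = 1}, so |x| = card of the set.\<close>

definition hamming_cube :: "nat \<Rightarrow> nat set set" where
  "hamming_cube n = Pow {..<n}"

definition hamming_ball :: "nat \<Rightarrow> nat \<Rightarrow> nat set set" where
  "hamming_ball n r = {x \<in> hamming_cube n. card x \<le> r}"

definition cube_adj :: "nat set \<Rightarrow> nat set \<Rightarrow> real" where
  "cube_adj x y = (if card (sym_diff x y) = 1 then 1 else 0)"

definition adj_apply :: "nat set set \<Rightarrow> (nat set \<Rightarrow> real) \<Rightarrow> nat set \<Rightarrow> real" where
  "adj_apply V f x = (\<Sum>y\<in>V. cube_adj x y * f y)"

definition is_eigenpair :: "nat set set \<Rightarrow> real \<Rightarrow> (nat set \<Rightarrow> real) \<Rightarrow> bool" where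
  "is_eigenpair V mu f \<longleftrightarrow> (\<exists>x\<in>V. f x \<noteq> 0) \<and> (\<forall>x\<in>V. adj_apply V f x = mu * f x)"

definition krawtchouk :: "nat \<Rightarrow> nat \<Rightarrow> real \<Rightarrow> real" where
  "krawtchouk n k t = (\<Sum>l\<le>k. (-1)^l * (t gchoose l) * ((real n - t) gchoose (k - l)))"

end

theory Submission
  imports Defs "HOL-Computational_Algebra.Formal_Power_Series" "HOL-Analysis.Analysis"
begin

unbundle fps_syntax

definition FA :: "real \<Rightarrow> real fps" where "FA a = Abs_fps (\<lambda>l. (-1)^l * (a gchoose l))"
definition FB :: "real \<Rightarrow> real fps" where "FB b = Abs_fps (\<lambda>l. (b gchoose l))"

lemma kraw_fps: "krawtchouk n k t = (FA t * FB (real n - t)) $ k"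
  by (simp add: krawtchouk_def fps_mult_nth FA_def FB_def atLeast0AtMost)

lemma absorb: "of_nat (Suc m) * ((a::real) gchoose Suc m) = (a - of_nat m) * (a gchoose m)"
  by (simp only: gbinomial_absorption gbinomial_absorb_comp)

lemma dA: "(1 - fps_X) * fps_deriv (FA a) = fps_const (-a) * FA a"
proof (rule fps_ext)
  fix m
  have "((1 - fps_X) * fps_deriv (FA a)) $ m = fps_deriv (FA a) $ m - (fps_X * fps_deriv (FA a)) $ m"
    by (simp add: algebra_simps)
  also have "\<dots> = - a * ((-1)^m * (a gchoose m))"
  proof (cases m)
    case 0 then show ?thesis by (simp add: FA_def)
  next
    case (Suc j)
    have "fps_deriv (FA a) $ m = (-1)^(Suc m) * ((a - of_nat m) * (a gchoose m))"
      using absorb[of m a] by (simp add: FA_def)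
    moreover have "(fps_X * fps_deriv (FA a)) $ m = (-1)^m * (of_nat m * (a gchoose m))"
      using Suc by (simp add: FA_def)
    ultimately show ?thesis by (simp add: algebra_simps)
  qed
  finally show "((1 - fps_X) * fps_deriv (FA a)) $ m = (fps_const (-a) * FA a) $ m"
    by (simp add: FA_def)
qed

lemma dB: "(1 + fps_X) * fps_deriv (FB b) = fps_const b * FB b"
proof (rule fps_ext)
  fix m
  have "((1 + fps_X) * fps_deriv (FB b)) $ m = fps_deriv (FB b) $ m + (fps_X * fps_deriv (FB b)) $ m"
    by (simp add: algebra_simps)
  also have "\<dots> = b * (b gchoose m)"
  proof (cases m)
    case 0 then show ?thesis by (simp add: FB_def)
  next
    case (Suc j)
    have "fps_deriv (FB b) $ m = ((b - of_nat m) * (b gchoose m))"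
      using absorb[of m b] by (simp add: FB_def)
    moreover have "(fps_X * fps_deriv (FB b)) $ m = (of_nat m * (b gchoose m))"
      using Suc by (simp add: FB_def)
    ultimately show ?thesis by (simp add: algebra_simps)
  qed
  finally show "((1 + fps_X) * fps_deriv (FB b)) $ m = (fps_const b * FB b) $ m"
    by (simp add: FB_def)
qed

lemma Gid: "(1 - fps_X * fps_X) * fps_deriv (FA a * FB b) =
   fps_const (b - a) * (FA a * FB b) - fps_const (a + b) * (fps_X * (FA a * FB b))"
proof -
  have "(1 - fps_X * fps_X) * fps_deriv (FA a * FB b) =
     (1 + fps_X) * ((1 - fps_X) * fps_deriv (FA a)) * FB b + (1 - fps_X) * FA a * ((1 + fps_X) * fps_deriv (FB b))"
    by (simp add: fps_deriv_mult algebra_simps)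
  also have "\<dots> = fps_const (b - a) * (FA a * FB b) - fps_const (a + b) * (fps_X * (FA a * FB b))"
  proof -
    have e: "fps_const (b - a) = fps_const b - fps_const a" "fps_const (a+b) = fps_const a + fps_const b"
      "fps_const (-a) = - fps_const a" by simp_all
    show ?thesis unfolding dA dB e by (simp only: algebra_simps mult_minus_right mult_1_left add_minus_cancel minus_add_cancel) (simp add: algebra_simps)
  qed
  finally show ?thesis .
qed

lemma kraw_rec:
  "real (Suc k) * krawtchouk n (Suc k) t =
     (real n - 2 * t) * krawtchouk n k t - (if k = 0 then 0 else (real n - real k + 1) * krawtchouk n (k - 1) t)"
proof -
  define G where "G = FA t * FB (real n - t)"
  have "((1 - fps_X * fps_X) * fps_deriv G) $ k = (fps_const (real n - t - t) * G - fps_const (t + (real n - t)) * (fps_X * G)) $ k"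
    unfolding G_def by (simp only: Gid)
  moreover have "((1 - fps_X * fps_X) * fps_deriv G) $ k = fps_deriv G $ k - (fps_X * (fps_X * fps_deriv G)) $ k"
    by (simp add: algebra_simps)
  ultimately have *: "fps_deriv G $ k - (fps_X * (fps_X * fps_deriv G)) $ k = (real n - 2*t) * G $ k - real n * (fps_X * G) $ k"
    by simp
  have K: "krawtchouk n j t = G $ j" for j unfolding G_def kraw_fps ..
  show ?thesis
  proof (cases k)
    case 0 then show ?thesis using * by (simp add: K)
  next
    case (Suc j)
    show ?thesis
    proof (cases j)
      case 0 then show ?thesis using * Suc by (simp add: K algebra_simps)
    next
      case (Suc i)
      then show ?thesis using * \<open>k = Suc j\<close> by (simp add: K algebra_simps)
    qed
  qed
qed


lemma kraw0[simp]: "krawtchouk n 0 t = 1"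
  by (simp add: krawtchouk_def)

lemma kraw1: "krawtchouk n 1 t = real n - 2 * t"
  using kraw_rec[of 0 n t] by simp

lemma kraw_neg_pos:
  assumes "t < 0" "k \<le> n + 1"
  shows "krawtchouk n k t > 0"
  unfolding krawtchouk_def
proof (rule sum_pos)
  fix l assume l: "l \<in> {..k}"
  have a: "(-1)^l * (t gchoose l) > 0"
  proof -
    have "(-1)^l * (t gchoose l) = ((-1)^l * (-1)^l) * pochhammer (-t) l / fact l"
      by (simp add: gbinomial_pochhammer)
    also have "\<dots> = pochhammer (-t) l / fact l"
      by (simp add: power_mult_distrib[symmetric])
    also have "\<dots> > 0" using assms(1) by (intro divide_pos_pos pochhammer_pos) auto
    finally show ?thesis .
  qed
  have b: "((real n - t) gchoose (k - l)) > 0"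
    unfolding gbinomial_prod_rev
  proof (intro divide_pos_pos prod_pos)
    fix i assume "i \<in> {0..<k-l}"
    then have "real i \<le> real n" using assms(2) by auto
    then show "0 < real n - t - of_nat i" using assms(1) by simp
  qed simp
  show "0 < (-1)^l * (t gchoose l) * ((real n - t) gchoose (k - l))"
    using a b by simp
qed auto

lemma kraw_cont: "continuous_on S (krawtchouk n k)"
  unfolding krawtchouk_def[abs_def] gbinomial_prod_rev
  by (intro continuous_intros) auto

lemma kraw_root:
  assumes "2 * r \<le> n"
  shows "\<exists>x. krawtchouk n (Suc r) x = 0 \<and> (\<forall>y. krawtchouk n (Suc r) y = 0 \<longrightarrow> x \<le> y) \<and>
             (\<forall>k\<le>r. krawtchouk n k x > 0)"
proof -
  define T where "T = {t::real. 0 \<le> t \<and> (\<exists>k\<le>Suc r. krawtchouk n k t \<le> 0)}"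
  define x where "x = Inf T"
  have "real n / 2 \<in> T" unfolding T_def using kraw1[of n "real n / 2"]
    by (intro CollectI conjI exI[of _ 1]) auto
  then have ne: "T \<noteq> {}" by auto
  have bdd: "bdd_below T" unfolding T_def by (intro bdd_belowI[of _ 0]) auto
  have cl: "closed T"
  proof -
    have "T = {0..} \<inter> (\<Union>k\<in>{..Suc r}. {t. krawtchouk n k t \<le> 0})"
      unfolding T_def by auto
    moreover have "closed {t. krawtchouk n k t \<le> 0}" for k
      using kraw_cont[of UNIV n k] by (intro closed_Collect_le) (auto simp: continuous_on_const)
    ultimately show ?thesis by (auto intro!: closed_Int closed_UN)
  qed
  have xT: "x \<in> T" unfolding x_def using closed_contains_Inf[OF ne bdd cl] .
  have below: "krawtchouk n k s > 0" if "s < x" "k \<le> Suc r" for s k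
  proof (cases "s < 0")
    case True then show ?thesis using kraw_neg_pos[of s k n] that assms by auto
  next
    case False
    have "s \<notin> T"
    proof
      assume "s \<in> T" then have "x \<le> s" unfolding x_def using bdd by (simp add: cInf_lower)
      then show False using that by simp
    qed
    then show ?thesis using False that unfolding T_def by force
  qed
  have nonneg: "krawtchouk n k x \<ge> 0" if "k \<le> Suc r" for k
  proof (rule ccontr)
    assume neg: "\<not> krawtchouk n k x \<ge> 0"
    have "krawtchouk n k (x - 1) > 0" using below that by simp
    then obtain z where z: "x - 1 \<le> z" "z \<le> x" "krawtchouk n k z = 0"
      using IVT2'[of "krawtchouk n k" x 0 "x - 1"] neg kraw_cont[of _ n k] by force
    then have "z \<noteq> x" using neg by auto
    then have "z < x" using z by simp
    then show False using below[of z k] that z by simp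
  qed
  have pos: "k \<le> r \<Longrightarrow> krawtchouk n k x > 0" for k
  proof (induction k)
    case 0 then show ?case by simp
  next
    case (Suc k)
    have IH: "krawtchouk n k x > 0" using Suc by simp
    show ?case
    proof (rule ccontr)
      assume "\<not> krawtchouk n (Suc k) x > 0"
      then have z: "krawtchouk n (Suc k) x = 0" using nonneg[of "Suc k"] Suc.prems by simp
      have "real (Suc (Suc k)) * krawtchouk n (Suc (Suc k)) x = - (real n - real (Suc k) + 1) * krawtchouk n k x"
        using kraw_rec[of "Suc k" n x] z by (simp add: algebra_simps)
      moreover have "real n - real (Suc k) + 1 > 0" using Suc.prems assms by simp
      ultimately have "real (Suc (Suc k)) * krawtchouk n (Suc (Suc k)) x < 0"
        using IH by (simp add: mult_pos_pos mult_less_0_iff)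
      moreover have "krawtchouk n (Suc (Suc k)) x \<ge> 0" using nonneg[of "Suc (Suc k)"] Suc.prems by simp
      ultimately show False by (simp add: mult_less_0_iff)
    qed
  qed
  have root: "krawtchouk n (Suc r) x = 0"
  proof -
    obtain k where k: "k \<le> Suc r" "krawtchouk n k x \<le> 0" using xT unfolding T_def by auto
    then have "k = Suc r" using pos[of k] by force
    then show ?thesis using k nonneg[of "Suc r"] by simp
  qed
  have "\<forall>y. krawtchouk n (Suc r) y = 0 \<longrightarrow> x \<le> y"
    using below[of _ "Suc r"] by (metis less_irrefl not_le)
  then show ?thesis using root pos by blast
qed



lemma adj_sym: "cube_adj x y = cube_adj y x"
  unfolding cube_adj_def by (simp add: Un_commute)

lemma adj_nonneg: "cube_adj x y \<ge> 0"
  unfolding cube_adj_def by simp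

lemma finite_ball: "finite (hamming_ball n r)"
  unfolding hamming_ball_def hamming_cube_def by simp

lemma ball_finite_elem: "v \<in> hamming_ball n r \<Longrightarrow> finite v"
  unfolding hamming_ball_def hamming_cube_def by (auto intro: finite_subset)

lemma empty_in_ball: "{} \<in> hamming_ball n r"
  unfolding hamming_ball_def hamming_cube_def by simp

lemma pf_bound:
  assumes fin: "finite V" and fpos: "\<forall>x\<in>V. f x > 0"
    and feig: "\<forall>x\<in>V. adj_apply V f x = lam * f x"
    and g: "is_eigenpair V mu g"
  shows "mu \<le> lam"
proof -
  obtain x0 where x0: "x0 \<in> V" "g x0 \<noteq> 0" using g unfolding is_eigenpair_def by auto
  define S where "S = (\<Sum>x\<in>V. f x * \<bar>g x\<bar>)"
  have Spos: "S > 0" unfolding S_def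
  proof (rule sum_pos2[OF fin x0(1)])
    show "0 < f x0 * \<bar>g x0\<bar>" using x0 fpos by simp
    show "0 \<le> f i * \<bar>g i\<bar>" if "i \<in> V" for i using that fpos by (simp add: less_imp_le)
  qed
  have "(\<Sum>x\<in>V. f x * adj_apply V (\<lambda>y. \<bar>g y\<bar>) x) = (\<Sum>x\<in>V. \<Sum>y\<in>V. f x * cube_adj x y * \<bar>g y\<bar>)"
    unfolding adj_apply_def by (simp add: sum_distrib_left mult.assoc)
  also have "\<dots> = (\<Sum>y\<in>V. \<Sum>x\<in>V. f x * cube_adj x y * \<bar>g y\<bar>)"
    by (rule sum.swap)
  also have "\<dots> = (\<Sum>y\<in>V. \<bar>g y\<bar> * adj_apply V f y)"
    unfolding adj_apply_def
  proof (intro sum.cong refl)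
    fix y assume "y \<in> V"
    show "(\<Sum>x\<in>V. f x * cube_adj x y * \<bar>g y\<bar>) = \<bar>g y\<bar> * (\<Sum>x\<in>V. cube_adj y x * f x)"
      unfolding sum_distrib_left by (intro sum.cong refl) (simp add: adj_sym[of y])
  qed
  also have "\<dots> = lam * S" unfolding S_def using feig by (simp add: sum_distrib_left algebra_simps)
  finally have e1: "(\<Sum>x\<in>V. f x * adj_apply V (\<lambda>y. \<bar>g y\<bar>) x) = lam * S" .
  have "\<bar>mu\<bar> * S = (\<Sum>x\<in>V. f x * \<bar>adj_apply V g x\<bar>)"
    unfolding S_def using g unfolding is_eigenpair_def by (simp add: sum_distrib_left abs_mult algebra_simps)
  also have "\<dots> \<le> (\<Sum>x\<in>V. f x * adj_apply V (\<lambda>y. \<bar>g y\<bar>) x)"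
  proof (rule sum_mono)
    fix x assume "x \<in> V"
    have "\<bar>adj_apply V g x\<bar> \<le> adj_apply V (\<lambda>y. \<bar>g y\<bar>) x"
      unfolding adj_apply_def
      by (rule order_trans[OF sum_abs]) (simp add: abs_mult adj_nonneg)
    then show "f x * \<bar>adj_apply V g x\<bar> \<le> f x * adj_apply V (\<lambda>y. \<bar>g y\<bar>) x"
      using fpos \<open>x \<in> V\<close> by (simp add: mult_left_mono)
  qed
  finally have "\<bar>mu\<bar> * S \<le> lam * S" using e1 by simp
  then have "\<bar>mu\<bar> \<le> lam" using Spos by simp
  then show ?thesis by simp
qed

lemma zero_spread:
  assumes fin: "finite V" and hnn: "\<forall>x\<in>V. h x \<ge> 0"
    and eig: "adj_apply V h v = lam * h v" and hv: "h v = 0"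
    and u: "u \<in> V" "cube_adj v u = 1"
  shows "h u = 0"
proof -
  have "(\<Sum>y\<in>V. cube_adj v y * h y) = 0" using eig hv unfolding adj_apply_def by simp
  then have "\<forall>y\<in>V. cube_adj v y * h y = 0"
    using fin hnn by (subst (asm) sum_nonneg_eq_0_iff) (auto intro: mult_nonneg_nonneg adj_nonneg)
  then show ?thesis using u by auto
qed

lemma remove_in_ball: "v \<in> hamming_ball n r \<Longrightarrow> v - {a} \<in> hamming_ball n r"
proof -
  assume v: "v \<in> hamming_ball n r"
  then have "v \<subseteq> {..<n}" "card v \<le> r" unfolding hamming_ball_def hamming_cube_def by auto
  moreover have "card (v - {a}) \<le> card v"
    using \<open>v \<subseteq> {..<n}\<close> by (intro card_mono) (auto intro: finite_subset)
  ultimately show ?thesis unfolding hamming_ball_def hamming_cube_def by auto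
qed

lemma adj_remove: "a \<in> v \<Longrightarrow> cube_adj v (v - {a}) = 1"
proof -
  assume "a \<in> v"
  then have "sym_diff v (v - {a}) = {a}" by auto
  then show ?thesis unfolding cube_adj_def by simp
qed

lemma spread_all:
  assumes hnn: "\<forall>x\<in>hamming_ball n r. h x \<ge> 0"
    and eig: "\<forall>x\<in>hamming_ball n r. adj_apply (hamming_ball n r) h x = lam * h x"
    and v0: "v0 \<in> hamming_ball n r" "h v0 = 0"
  shows "\<forall>v\<in>hamming_ball n r. h v = 0"
proof -
  let ?V = "hamming_ball n r"
  have step: "h u = 0" if "v \<in> ?V" "h v = 0" "u \<in> ?V" "cube_adj v u = 1" for u v
    using zero_spread[OF finite_ball hnn _ that(2) that(3,4)] eig that(1) by blast
  have down: "\<forall>v. v \<in> ?V \<longrightarrow> card v = m \<longrightarrow> h v = 0 \<longrightarrow> h {} = 0" for m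
  proof (induction m)
    case 0 then show ?case using ball_finite_elem by fastforce
  next
    case (Suc m)
    show ?case
    proof (intro allI impI)
      fix v assume v: "v \<in> ?V" "card v = Suc m" "h v = 0"
      then obtain a where a: "a \<in> v" by (metis card.empty ex_in_conv nat.distinct(1))
      have fv: "finite v" using ball_finite_elem v by blast
      have "h (v - {a}) = 0" using step[OF v(1) v(3) remove_in_ball[OF v(1)] adj_remove[OF a]] .
      moreover have "card (v - {a}) = m" using v a fv by simp
      ultimately show "h {} = 0" using Suc.IH remove_in_ball[OF v(1)] by blast
    qed
  qed
  have h0: "h {} = 0" using down v0 by blast
  have up: "\<forall>v. v \<in> ?V \<longrightarrow> card v = m \<longrightarrow> h v = 0" for m
  proof (induction m)
    case 0 then show ?case using ball_finite_elem h0 by fastforce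
  next
    case (Suc m)
    show ?case
    proof (intro allI impI)
      fix v assume v: "v \<in> ?V" "card v = Suc m"
      then obtain a where a: "a \<in> v" by (metis card.empty ex_in_conv nat.distinct(1))
      have fv: "finite v" using ball_finite_elem v by blast
      have "card (v - {a}) = m" using v a fv by simp
      then have "h (v - {a}) = 0" using Suc.IH remove_in_ball[OF v(1)] by blast
      moreover have "cube_adj (v - {a}) v = 1" using adj_remove[OF a] adj_sym by metis
      ultimately show "h v = 0" using step remove_in_ball[OF v(1)] v(1) by blast
    qed
  qed
  show ?thesis using up by blast
qed

lemma pf_simple:
  assumes fpos: "\<forall>x\<in>hamming_ball n r. f x > 0"
    and feig: "\<forall>x\<in>hamming_ball n r. adj_apply (hamming_ball n r) f x = lam * f x"
    and g: "is_eigenpair (hamming_ball n r) lam g"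
  shows "\<exists>c. \<forall>v\<in>hamming_ball n r. g v = c * f v"
proof -
  let ?V = "hamming_ball n r"
  have fin: "finite ?V" by (rule finite_ball)
  have ne: "?V \<noteq> {}" using empty_in_ball by blast
  obtain v0 where v0: "v0 \<in> ?V" "\<forall>v\<in>?V. g v0 / f v0 \<le> g v / f v"
  proof -
    let ?q = "\<lambda>v. g v / f v"
    have "Min (?q ` ?V) \<in> ?q ` ?V" using fin ne by simp
    then obtain v0 where "v0 \<in> ?V" "?q v0 = Min (?q ` ?V)" by auto
    moreover have "\<forall>v\<in>?V. Min (?q ` ?V) \<le> ?q v" using fin by simp
    ultimately show ?thesis using that by auto
  qed
  define c where "c = g v0 / f v0"
  define h where "h = (\<lambda>v. g v - c * f v)"
  have hnn: "\<forall>x\<in>?V. h x \<ge> 0"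
  proof
    fix x assume x: "x \<in> ?V"
    have "c \<le> g x / f x" using v0 x unfolding c_def by blast
    then have "c * f x \<le> g x" using fpos x by (simp add: pos_le_divide_eq)
    then show "h x \<ge> 0" unfolding h_def by simp
  qed
  have hlin: "adj_apply ?V h x = adj_apply ?V g x - c * adj_apply ?V f x" for x
    unfolding adj_apply_def h_def by (simp add: sum_subtractf sum_distrib_left algebra_simps)
  have heig: "\<forall>x\<in>?V. adj_apply ?V h x = lam * h x"
    using feig g unfolding is_eigenpair_def hlin by (simp add: h_def algebra_simps)
  have "h v0 = 0" unfolding h_def c_def using fpos v0 by (simp add: less_imp_neq[symmetric])
  then have "\<forall>v\<in>?V. h v = 0" using spread_all[OF hnn heig v0(1)] by blast
  then show ?thesis unfolding h_def by (intro exI[of _ c]) auto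
qed



lemma sd1: assumes "sym_diff v y = {a}" "a \<in> v" shows "y = v - {a}"
proof (rule set_eqI)
  fix z
  have h: "(z \<in> v \<and> z \<notin> y \<or> z \<in> y \<and> z \<notin> v) = (z = a)" using assms(1)
    by (metis DiffD1 DiffD2 DiffI UnCI UnE singletonD singletonI)
  show "z \<in> y \<longleftrightarrow> z \<in> v - {a}" using h assms(2) by (cases "z = a") auto
qed
lemma sd2: assumes "sym_diff v y = {a}" "a \<notin> v" shows "y = insert a v"
proof (rule set_eqI)
  fix z
  have h: "(z \<in> v \<and> z \<notin> y \<or> z \<in> y \<and> z \<notin> v) = (z = a)" using assms(1)
    by (metis DiffD1 DiffD2 DiffI UnCI UnE singletonD singletonI)
  show "z \<in> y \<longleftrightarrow> z \<in> insert a v" using h assms(2) by (cases "z = a") auto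
qed
lemma sd3: "a \<in> v \<Longrightarrow> y = v - {a} \<Longrightarrow> sym_diff v y = {a}" by auto
lemma sd4: "a \<notin> v \<Longrightarrow> y = insert a v \<Longrightarrow> sym_diff v y = {a}" by auto

lemma adj_spherical:
  assumes v: "v \<in> hamming_ball n r"
  shows "adj_apply (hamming_ball n r) (\<lambda>w. phi (card w)) v =
    real (card v) * phi (card v - 1) + (if card v < r then real (n - card v) * phi (Suc (card v)) else 0)"
proof -
  let ?V = "hamming_ball n r"
  let ?F = "\<lambda>w. phi (card w)"
  have vsub: "v \<subseteq> {..<n}" and vc: "card v \<le> r" using v unfolding hamming_ball_def hamming_cube_def by auto
  have fv: "finite v" using vsub finite_subset by blast
  define N where "N = {y \<in> ?V. card (sym_diff v y) = 1}"
  define D where "D = (\<lambda>a. v - {a}) ` v"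
  define U where "U = (if card v < r then (\<lambda>a. insert a v) ` ({..<n} - v) else {})"
  have s1: "adj_apply ?V ?F v = sum ?F N"
    unfolding adj_apply_def cube_adj_def N_def using finite_ball[of n r]
    by (simp add: sum.inter_filter) (intro sum.cong refl, simp)
  have ND: "N = D \<union> U"
  proof
    show "N \<subseteq> D \<union> U"
    proof
      fix y assume "y \<in> N"
      then have y: "y \<in> ?V" "card (sym_diff v y) = 1" unfolding N_def by auto
      then obtain a where a: "sym_diff v y = {a}" by (meson card_1_singletonE)
      have ysub: "y \<subseteq> {..<n}" and yc: "card y \<le> r" using y unfolding hamming_ball_def hamming_cube_def by auto
      show "y \<in> D \<union> U"
      proof (cases "a \<in> v")
        case True
        have "y = v - {a}" using sd1[OF a True] .
        then show ?thesis unfolding D_def using True by blast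
      next
        case False
        have ye: "y = insert a v" using sd2[OF a False] .
        then have "a < n" using ysub by auto
        moreover have "card y = Suc (card v)" using ye False fv by simp
        ultimately show ?thesis unfolding U_def using yc False ye by auto
      qed
    qed
  next
    show "D \<union> U \<subseteq> N"
    proof
      fix y assume "y \<in> D \<union> U"
      then show "y \<in> N"
      proof
        assume "y \<in> D"
        then obtain a where a: "a \<in> v" "y = v - {a}" unfolding D_def by auto
        then have "sym_diff v y = {a}" by (intro sd3)
        then show ?thesis unfolding N_def using remove_in_ball[OF v] a by auto
      next
        assume "y \<in> U"
        then obtain a where a: "a < n" "a \<notin> v" "y = insert a v" "card v < r"
          unfolding U_def by (auto split: if_splits)
        then have "sym_diff v y = {a}" by (intro sd4)
        moreover have "y \<in> ?V" using a vsub fv unfolding hamming_ball_def hamming_cube_def by auto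
        ultimately show ?thesis unfolding N_def by auto
      qed
    qed
  qed
  have finD: "finite D" unfolding D_def using fv by simp
  have finU: "finite U" unfolding U_def by simp
  have disj: "D \<inter> U = {}"
  proof (rule ccontr)
    assume "D \<inter> U \<noteq> {}"
    then obtain a b where ab: "a \<in> v" "b \<notin> v" "v - {a} = insert b v"
      unfolding D_def U_def by (auto split: if_splits)
    then have "b \<in> v - {a}" by (metis insertI1)
    then show False using ab(2) by simp
  qed
  have sD: "sum ?F D = real (card v) * phi (card v - 1)"
  proof -
    have "inj_on (\<lambda>a. v - {a}) v"
    proof (rule inj_onI)
      fix a b assume ab: "a \<in> v" "b \<in> v" "v - {a} = v - {b}"
      show "a = b"
      proof (rule ccontr)
        assume "a \<noteq> b"
        then have "a \<in> v - {b}" using ab by simp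
        then have "a \<in> v - {a}" using ab(3) by metis
        then show False by simp
      qed
    qed
    then have "sum ?F D = (\<Sum>a\<in>v. phi (card (v - {a})))" unfolding D_def
      by (simp add: sum.reindex)
    also have "\<dots> = (\<Sum>a\<in>v. phi (card v - 1))" using fv by (intro sum.cong refl) simp
    finally show ?thesis by simp
  qed
  have sU: "sum ?F U = (if card v < r then real (n - card v) * phi (Suc (card v)) else 0)"
  proof (cases "card v < r")
    case True
    have "inj_on (\<lambda>a. insert a v) ({..<n} - v)"
    proof (rule inj_onI)
      fix a b assume ab: "a \<in> {..<n} - v" "b \<in> {..<n} - v" "insert a v = insert b v"
      then have "a \<in> insert b v" by (metis insertI1)
      then show "a = b" using ab(1) by simp
    qed
    then have "sum ?F U = (\<Sum>a\<in>{..<n} - v. phi (card (insert a v)))" unfolding U_def using True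
      by (simp add: sum.reindex)
    also have "\<dots> = (\<Sum>a\<in>{..<n} - v. phi (Suc (card v)))" using fv by (intro sum.cong refl) simp
    also have "\<dots> = real (n - card v) * phi (Suc (card v))"
      using vsub fv by (simp add: card_Diff_subset)
    finally show ?thesis using True by simp
  next
    case False then show ?thesis unfolding U_def by simp
  qed
  show ?thesis using s1 ND finD finU disj sD sU by (simp add: sum.union_disjoint)
qed



lemma bin_rec: "real (Suc k) * real (n choose Suc k) = real (n - k) * real (n choose k)"
proof -
  have "Suc k * (n choose Suc k) = (n - k) * (n choose k)"
    by (simp only: binomial_absorption binomial_absorb_comp)
  then show ?thesis by (metis of_nat_mult)
qed

theorem corollary1p8:
  fixes n r :: nat
  assumes "2 * r \<le> n"
  shows "\<exists>x f.
     krawtchouk n (r + 1) x = 0 \<and> (\<forall>y. krawtchouk n (r + 1) y = 0 \<longrightarrow> x \<le> y) \<and>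
     is_eigenpair (hamming_ball n r) (real n - 2 * x) f \<and>
     (\<forall>mu g. is_eigenpair (hamming_ball n r) mu g \<longrightarrow> mu \<le> real n - 2 * x) \<and>
     (\<forall>g. is_eigenpair (hamming_ball n r) (real n - 2 * x) g \<longrightarrow>
            (\<exists>c. \<forall>v\<in>hamming_ball n r. g v = c * f v)) \<and>
     (\<forall>v\<in>hamming_ball n r. f v > 0) \<and>
     (\<forall>u\<in>hamming_ball n r. \<forall>v\<in>hamming_ball n r. card u = card v \<longrightarrow> f u = f v)"
proof -
  obtain x where root: "krawtchouk n (Suc r) x = 0"
    and minr: "\<forall>y. krawtchouk n (Suc r) y = 0 \<longrightarrow> x \<le> y"
    and kpos: "\<forall>k\<le>r. krawtchouk n k x > 0"
    using kraw_root[OF assms] by blast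
  define K where "K = (\<lambda>j. krawtchouk n j x)"
  define c where "c = (\<lambda>j. real (n choose j))"
  define phi where "phi = (\<lambda>j. K j / c j)"
  define f where "f = (\<lambda>w::nat set. phi (card w))"
  let ?V = "hamming_ball n r"
  let ?lam = "real n - 2 * x"
  have cpos: "j \<le> n \<Longrightarrow> c j > 0" for j unfolding c_def by simp
  have phic: "j \<le> n \<Longrightarrow> phi j * c j = K j" for j
    unfolding phi_def using cpos[of j] by simp
  have phipos: "j \<le> r \<Longrightarrow> phi j > 0" for j
    unfolding phi_def K_def using kpos cpos[of j] assms by simp
  have eq: "real i * phi (i - 1) + (if i < r then real (n - i) * phi (Suc i) else 0) = ?lam * phi i"
    if i: "i \<le> r" for i
  proof -
    have rn: "r \<le> n" using assms by simp
    have A: "real i * phi (i - 1) * c i = (if i = 0 then 0 else (real n - real (i - 1)) * K (i - 1))"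
    proof (cases i)
      case 0 then show ?thesis by simp
    next
      case (Suc j)
      have "real i * phi (i - 1) * c i = phi j * (real (Suc j) * c (Suc j))" using Suc by simp
      also have "\<dots> = phi j * c j * real (n - j)" unfolding c_def bin_rec by simp
      also have "\<dots> = K j * (real n - real j)" using phic[of j] Suc i rn by simp
      finally show ?thesis using Suc by simp
    qed
    have B: "(if i < r then real (n - i) * phi (Suc i) else 0) * c i = real (Suc i) * K (Suc i)"
    proof (cases "i < r")
      case True
      have "real (n - i) * phi (Suc i) * c i = phi (Suc i) * (real (Suc i) * c (Suc i))"
        unfolding c_def bin_rec by simp
      also have "\<dots> = real (Suc i) * K (Suc i)" using phic[of "Suc i"] True rn by simp
      finally show ?thesis using True by simp
    next
      case False
      then have "i = r" using i by simp
      then show ?thesis using root unfolding K_def by simp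
    qed
    have R: "real (Suc i) * K (Suc i) = ?lam * K i - (if i = 0 then 0 else (real n - real i + 1) * K (i - 1))"
      unfolding K_def by (rule kraw_rec)
    have "(real i * phi (i - 1) + (if i < r then real (n - i) * phi (Suc i) else 0)) * c i = ?lam * phi i * c i"
    proof -
      have "(real i * phi (i - 1) + (if i < r then real (n - i) * phi (Suc i) else 0)) * c i
          = real i * phi (i - 1) * c i + (if i < r then real (n - i) * phi (Suc i) else 0) * c i"
        by (simp add: algebra_simps)
      also have "\<dots> = (if i = 0 then 0 else (real n - real (i - 1)) * K (i - 1)) + real (Suc i) * K (Suc i)"
        by (simp only: A B)
      also have "\<dots> = ?lam * K i"
      proof (cases i)
        case 0 then show ?thesis using R by simp
      next
        case (Suc j)
        have "real n - real (i - 1) = real n - real i + 1" using Suc by simp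
        then show ?thesis using R Suc by simp
      qed
      also have "\<dots> = ?lam * phi i * c i" using phic[of i] i rn by simp
      finally show ?thesis .
    qed
    then show ?thesis using cpos[of i] i rn by simp
  qed
  have fpos: "\<forall>v\<in>?V. f v > 0"
    unfolding f_def hamming_ball_def using phipos by auto
  have feig: "\<forall>v\<in>?V. adj_apply ?V f v = ?lam * f v"
  proof
    fix v assume v: "v \<in> ?V"
    then have "card v \<le> r" unfolding hamming_ball_def by simp
    then show "adj_apply ?V f v = ?lam * f v"
      unfolding f_def adj_spherical[OF v] using eq by simp
  qed
  have eig: "is_eigenpair ?V ?lam f"
    unfolding is_eigenpair_def
  proof (intro conjI)
    have "f {} > 0" using fpos empty_in_ball[of n r] by blast
    then show "\<exists>v\<in>?V. f v \<noteq> 0" using empty_in_ball[of n r] by force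
  qed (rule feig)
  have maxi: "\<forall>mu g. is_eigenpair ?V mu g \<longrightarrow> mu \<le> ?lam"
    using pf_bound[OF finite_ball fpos feig] by blast
  have simple: "\<forall>g. is_eigenpair ?V ?lam g \<longrightarrow> (\<exists>c. \<forall>v\<in>?V. g v = c * f v)"
    using pf_simple[OF fpos feig] by blast
  have sph: "\<forall>u\<in>?V. \<forall>v\<in>?V. card u = card v \<longrightarrow> f u = f v" unfolding f_def by simp
  show ?thesis
    unfolding Suc_eq_plus1[symmetric]
    using root minr eig maxi simple fpos sph by blast
qed


end
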